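(* (i) If $N=2$, the infeasible SINR region $\Upsilon^c=\mathbb R_+^2\setminus\Upsilon$ is convex; explicitly, $\Upsilon=\{(\mu_1,\mu_2)\in\mathbb R_+^2:\mu_1\mu_2<\frac{g_{r_1^{k_1^*},t_1}}{g_{r_1^{k_1^*},t_2}}\cdot\frac{g_{r_2^{k_2^*},t_2}}{g_{r_2^{k_2^*},t_1}}\}$ where $k_i^*\in\arg\max_{k\in\mathcal K_i}g_{r_i^{k},t_j}/g_{r_i^{k},t_i}$ ($j\neq i$), assuming all cross gains are positive. (ii) For $N\geq 3$ this need not hold: for the system with $N=3$, $K_1=K_2=K_3=2$ and gains $(g_{r,t_1},g_{r,t_2},g_{r,t_3})$ equal to $(1,0.5,0.1)$ for $R_1^1$, $(1,0.1,0.5)$ for $R_1^2$, $(0.5,1,0.1)$ for $R_2^1$, $(0.1,1,0.5)$ for $R_2^2$, $(0.5,0.1,1)$ for $R_3^1$, $(0.1,0.5,1)$ for $R_3^2$, the set $\Upsilon^c$ is not convex.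
   Context: Multicast system: $N$ transmitters $T_1,\dots,T_N$; transmitter $T_i$ has $K_i\geq1$ receivers $R_i^{k}$, $k\in\mathcal K_i=\{1,\dots,K_i\}$. Channel gains $g_{r_i^{k},t_j}\geq 0$ (from $T_j$ to $R_i^k$) with $g_{r_i^{k},t_i}>0$; noise variance $\sigma^2>0$. For $\mathbf p\geq\mathbf 0$: $\gamma_i^{k}(\mathbf p)=\frac{g_{r_i^{k},t_i}p_i}{\sum_{j\neq i}g_{r_i^{k},t_j}p_j+\sigma^2}$, $\gamma_i(\mathbf p)=\min_{k\in\mathcal K_i}\gamma_i^k(\mathbf p)$, $\Gamma(\mathbf p)=(\gamma_1(\mathbf p),\dots,\gamma_N(\mathbf p))$. The feasible SINR region (no power constraint) is $\Upsilon=\{\Gamma(\mathbf p):\mathbf p\in\mathbb R^N,\mathbf p\geq\mathbf 0\}\subseteq\mathbb R_+^N$, and $\Upsilon^c=\mathbb R_+^N\setminus\Upsilon$ is the infeasible SINR region. *)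

theory Defs
  imports "HOL-Analysis.Analysis"
begin

(* Transmitters are indexed by a finite type 'n (so N = CARD('n));
   receivers of transmitter i are indexed by k in {1..K i};
   g i k j = gain from transmitter T_j to receiver R_i^k;  s = noise variance. *)

definition sinr_k :: "('n::finite \<Rightarrow> nat \<Rightarrow> 'n \<Rightarrow> real) \<Rightarrow> real \<Rightarrow> real^'n \<Rightarrow> 'n \<Rightarrow> nat \<Rightarrow> real" where
  "sinr_k g s p i k = g i k i * p$i / ((\<Sum>j\<in>UNIV-{i}. g i k j * p$j) + s)"

definition sinr :: "('n::finite \<Rightarrow> nat) \<Rightarrow> ('n \<Rightarrow> nat \<Rightarrow> 'n \<Rightarrow> real) \<Rightarrow> real \<Rightarrow> real^'n \<Rightarrow> 'n \<Rightarrow> real" where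
  "sinr K g s p i = Min ((\<lambda>k. sinr_k g s p i k) ` {1..K i})"

definition Gamma :: "('n::finite \<Rightarrow> nat) \<Rightarrow> ('n \<Rightarrow> nat \<Rightarrow> 'n \<Rightarrow> real) \<Rightarrow> real \<Rightarrow> real^'n \<Rightarrow> real^'n" where
  "Gamma K g s p = (\<chi> i. sinr K g s p i)"

definition nonneg_orthant :: "(real^'n::finite) set" where
  "nonneg_orthant = {\<mu>. \<forall>i. 0 \<le> \<mu>$i}"

definition feasible_region :: "('n::finite \<Rightarrow> nat) \<Rightarrow> ('n \<Rightarrow> nat \<Rightarrow> 'n \<Rightarrow> real) \<Rightarrow> real \<Rightarrow> (real^'n) set" where
  "feasible_region K g s = Gamma K g s ` nonneg_orthant"

definition infeasible_region :: "('n::finite \<Rightarrow> nat) \<Rightarrow> ('n \<Rightarrow> nat \<Rightarrow> 'n \<Rightarrow> real) \<Rightarrow> real \<Rightarrow> (real^'n) set" where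
  "infeasible_region K g s = nonneg_orthant - feasible_region K g s"

definition valid_system :: "('n::finite \<Rightarrow> nat) \<Rightarrow> ('n \<Rightarrow> nat \<Rightarrow> 'n \<Rightarrow> real) \<Rightarrow> real \<Rightarrow> bool" where
  "valid_system K g s \<longleftrightarrow> 0 < s \<and> (\<forall>i. 1 \<le> K i) \<and>
     (\<forall>i k j. k \<in> {1..K i} \<longrightarrow> 0 \<le> g i k j) \<and>
     (\<forall>i k. k \<in> {1..K i} \<longrightarrow> 0 < g i k i)"

definition ex_K :: "3 \<Rightarrow> nat" where "ex_K i = 2"

definition ex_gain :: "3 \<Rightarrow> nat \<Rightarrow> 3 \<Rightarrow> real" where
  "ex_gain i k j =
     (let v = (if i = 1 then (if k = 1 then (1, 0.5, 0.1) else (1, 0.1, 0.5))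
               else if i = 2 then (if k = 1 then (0.5, 1, 0.1) else (0.1, 1, 0.5))
               else (if k = 1 then (0.5, 0.1, 1) else (0.1, 0.5, 1)))
      in if j = 1 then fst v else if j = 2 then fst (snd v) else snd (snd v))"

end

theory Submission
  imports Defs
begin

lemma sumU3: "(\<Sum>j\<in>UNIV-{i::3}. f j) = f 1 + f 2 + f 3 - (f i :: real)"
  using sum.remove[of "UNIV::3 set" i f] by (simp add: sum_3)
lemma sumU2: "(\<Sum>j\<in>UNIV-{i::2}. f j) = f 1 + f 2 - (f i :: real)"
  using sum.remove[of "UNIV::2 set" i f] by (simp add: sum_2)
lemma ex_sinr:
  "sinr_k ex_gain s p 1 1 = p$1 / (1/2 * p$2 + 1/10 * p$3 + s)"
  "sinr_k ex_gain s p 1 2 = p$1 / (1/10 * p$2 + 1/2 * p$3 + s)"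
  "sinr_k ex_gain s p 2 1 = p$2 / (1/2 * p$1 + 1/10 * p$3 + s)"
  "sinr_k ex_gain s p 2 2 = p$2 / (1/10 * p$1 + 1/2 * p$3 + s)"
  "sinr_k ex_gain s p 3 1 = p$3 / (1/2 * p$1 + 1/10 * p$2 + s)"
  "sinr_k ex_gain s p 3 2 = p$3 / (1/10 * p$1 + 1/2 * p$2 + s)"
  unfolding sinr_k_def ex_gain_def sumU3 by (simp_all add: Let_def)

lemma Min_div:
  assumes "finite S" "S \<noteq> {}" "(x::real) \<ge> 0" "\<And>k. k \<in> S \<Longrightarrow> d k > 0"
  shows "Min ((\<lambda>k. x / d k) ` S) = x / Max (d ` S)"
proof -
  have "Max (d ` S) \<in> d ` S" using assms(1,2) by (intro Max_in) auto
  then obtain k0 where k0: "k0 \<in> S" "d k0 = Max (d ` S)" by force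
  show ?thesis
  proof (rule Min_eqI)
    show "finite ((\<lambda>k. x / d k) ` S)" using assms by simp
    show "x / Max (d ` S) \<in> (\<lambda>k. x / d k) ` S" using k0 by (metis image_eqI)
    fix y assume "y \<in> (\<lambda>k. x / d k) ` S"
    then obtain k where k: "k \<in> S" "y = x / d k" by auto
    have "d k \<le> Max (d ` S)" using k assms by simp
    then show "x / Max (d ` S) \<le> y" using k assms by (simp add: divide_left_mono frac_le)
  qed
qed

lemma cont_Max:
  assumes "finite S" "S \<noteq> {}" "\<And>k. k \<in> S \<Longrightarrow> continuous_on T (f k)"
  shows "continuous_on T (\<lambda>y. Max ((\<lambda>k. f k y) ` S) :: real)"
  using assms
proof (induction S rule: finite_ne_induct)
  case (singleton x)
  then show ?case by simp
next
  case (insert x F)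
  have "(\<lambda>y. Max ((\<lambda>k. f k y) ` insert x F)) = (\<lambda>y. max (f x y) (Max ((\<lambda>k. f k y) ` F)))"
    using insert.hyps by simp
  moreover have "continuous_on T (\<lambda>y. max (f x y) (Max ((\<lambda>k. f k y) ` F)))"
    by (rule continuous_on_max) (use insert in auto)
  ultimately show ?case by (metis image_insert)
qed
lemma hyp_conv:
  fixes x1 x2 y1 y2 u v C :: real
  assumes "0 \<le> x1" "0 \<le> x2" "0 \<le> y1" "0 \<le> y2" "C \<le> x1 * x2" "C \<le> y1 * y2" "0 < C"
    "0 \<le> u" "0 \<le> v" "u + v = 1"
  shows "C \<le> (u * x1 + v * y1) * (u * x2 + v * y2)"
proof -
  have e: "(x1*y2 + x2*y1)^2 - 4 * ((x1*x2)*(y1*y2)) = (x1*y2 - x2*y1)^2"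
    by (simp add: power2_eq_square algebra_simps)
  have "0 \<le> (x1*y2 - x2*y1)^2" by simp
  then have a1: "(x1*y2 + x2*y1)^2 \<ge> 4 * ((x1*x2)*(y1*y2))" using e by linarith
  have a2: "(x1*x2)*(y1*y2) \<ge> C * C" using assms by (intro mult_mono) auto
  have "(2*C)^2 = 4 * (C * C)" by (simp add: power2_eq_square)
  then have "(2*C)^2 \<le> (x1*y2 + x2*y1)^2" using a1 a2 by linarith
  then have h: "2*C \<le> x1*y2 + x2*y1"
    by (rule power2_le_imp_le) (use assms in simp)
  have "(u * x1 + v * y1) * (u * x2 + v * y2) = u * u * (x1 * x2) + v * v * (y1 * y2) + u * v * (x1 * y2 + x2 * y1)"
    by (simp add: algebra_simps)
  moreover have "u * u * C \<le> u * u * (x1 * x2)" using assms by (intro mult_left_mono) auto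
  moreover have "v * v * C \<le> v * v * (y1 * y2)" using assms by (intro mult_left_mono) auto
  moreover have "u * v * (2 * C) \<le> u * v * (x1 * y2 + x2 * y1)" using assms h by (intro mult_left_mono) auto
  moreover have "u * u * C + v * v * C + u * v * (2 * C) = C * (u + v) * (u + v)"
    by (simp add: algebra_simps)
  ultimately show ?thesis using assms by simp
qed


lemma part1:
  fixes K :: "2 \<Rightarrow> nat" and g :: "2 \<Rightarrow> nat \<Rightarrow> 2 \<Rightarrow> real" and s :: real and k1 k2 :: nat
  assumes vs: "valid_system K g s"
    and cross: "\<forall>i k j. k \<in> {1..K i} \<longrightarrow> j \<noteq> i \<longrightarrow> 0 < g i k j"
    and k1: "k1 \<in> {1..K 1}" and m1: "\<forall>k\<in>{1..K 1}. g 1 k 2 / g 1 k 1 \<le> g 1 k1 2 / g 1 k1 1"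
    and k2: "k2 \<in> {1..K 2}" and m2: "\<forall>k\<in>{1..K 2}. g 2 k 1 / g 2 k 2 \<le> g 2 k2 1 / g 2 k2 2"
  shows "convex (infeasible_region K g s) \<and>
      feasible_region K g s =
        {\<mu>. 0 \<le> \<mu>$1 \<and> 0 \<le> \<mu>$2 \<and>
             \<mu>$1 * \<mu>$2 < (g 1 k1 1 / g 1 k1 2) * (g 2 k2 2 / g 2 k2 1)}"
proof -
  have s: "0 < s" using vs unfolding valid_system_def by auto
  have gd: "\<And>i k. k \<in> {1..K i} \<Longrightarrow> 0 < g i k i" using vs unfolding valid_system_def by auto
  have c12: "\<And>k. k \<in> {1..K 1} \<Longrightarrow> 0 < g 1 k 2" using cross by force
  have c21: "\<And>k. k \<in> {1..K 2} \<Longrightarrow> 0 < g 2 k 1" using cross by force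
  define A where "A = g 1 k1 2 / g 1 k1 1"
  define B where "B = g 2 k2 1 / g 2 k2 2"
  have Ap: "0 < A" unfolding A_def using c12 gd k1 by simp
  have Bp: "0 < B" unfolding B_def using c21 gd k2 by simp
  define C where "C = (g 1 k1 1 / g 1 k1 2) * (g 2 k2 2 / g 2 k2 1)"
  have CAB: "C * (A * B) = 1" unfolding C_def A_def B_def
    using c12[OF k1] c21[OF k2] gd[OF k1] gd[OF k2] by (simp add: field_simps)
  have Cp: "0 < C" unfolding C_def
    using c12[OF k1] c21[OF k2] gd[OF k1] gd[OF k2] by simp
  define f1 where "f1 y = Max ((\<lambda>k. (g 1 k 2 * y + s) / g 1 k 1) ` {1..K 1})" for y
  define f2 where "f2 y = Max ((\<lambda>k. (g 2 k 1 * y + s) / g 2 k 2) ` {1..K 2})" for y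
  define c1 where "c1 = Max ((\<lambda>k. s / g 1 k 1) ` {1..K 1})"
  define c2 where "c2 = Max ((\<lambda>k. s / g 2 k 2) ` {1..K 2})"
  have ne1: "{1..K 1} \<noteq> {}" and ne2: "{1..K 2} \<noteq> {}" using k1 k2 by auto
  have f1ge: "A * y + s / g 1 k1 1 \<le> f1 y" for y
  proof -
    have "(g 1 k1 2 * y + s) / g 1 k1 1 \<le> f1 y" unfolding f1_def using k1 by (intro Max_ge) auto
    moreover have "(g 1 k1 2 * y + s) / g 1 k1 1 = A * y + s / g 1 k1 1"
      unfolding A_def by (simp add: add_divide_distrib)
    ultimately show ?thesis by simp
  qed
  have f2ge: "B * y + s / g 2 k2 2 \<le> f2 y" for y
  proof -
    have "(g 2 k2 1 * y + s) / g 2 k2 2 \<le> f2 y" unfolding f2_def using k2 by (intro Max_ge) auto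
    moreover have "(g 2 k2 1 * y + s) / g 2 k2 2 = B * y + s / g 2 k2 2"
      unfolding B_def by (simp add: add_divide_distrib)
    ultimately show ?thesis by simp
  qed
  have a1: "0 < s / g 1 k1 1" using s gd[OF k1] by simp
  have a2: "0 < s / g 2 k2 2" using s gd[OF k2] by simp
  have f1pos: "0 \<le> y \<Longrightarrow> 0 < f1 y" for y using f1ge[of y] a1 Ap
    by (smt (verit) mult_nonneg_nonneg)
  have f2pos: "0 \<le> y \<Longrightarrow> 0 < f2 y" for y using f2ge[of y] a2 Bp
    by (smt (verit) mult_nonneg_nonneg)
  have c1ge: "s / g 1 k 1 \<le> c1" if "k \<in> {1..K 1}" for k
    unfolding c1_def using that by (intro Max_ge) auto
  have c2ge: "s / g 2 k 2 \<le> c2" if "k \<in> {1..K 2}" for k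
    unfolding c2_def using that by (intro Max_ge) auto
  have c1nn: "0 \<le> c1" using c1ge[OF k1] a1 by simp
  have c2nn: "0 \<le> c2" using c2ge[OF k2] a2 by simp
  have f1le: "f1 y \<le> A * y + c1" if y: "0 \<le> y" for y
    unfolding f1_def
  proof (subst Max_le_iff, simp, use ne1 in simp, clarify)
    fix k assume k: "k \<in> {1..K 1}"
    have "(g 1 k 2 * y + s) / g 1 k 1 = (g 1 k 2 / g 1 k 1) * y + s / g 1 k 1"
      by (simp add: add_divide_distrib)
    moreover have "(g 1 k 2 / g 1 k 1) * y \<le> A * y"
      unfolding A_def using m1 k y by (intro mult_right_mono) auto
    moreover have "s / g 1 k 1 \<le> c1" using c1ge k by simp
    ultimately show "(g 1 k 2 * y + s) / g 1 k 1 \<le> A * y + c1" by simp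
  qed
  have f2le: "f2 y \<le> B * y + c2" if y: "0 \<le> y" for y
    unfolding f2_def
  proof (subst Max_le_iff, simp, use ne2 in simp, clarify)
    fix k assume k: "k \<in> {1..K 2}"
    have "(g 2 k 1 * y + s) / g 2 k 2 = (g 2 k 1 / g 2 k 2) * y + s / g 2 k 2"
      by (simp add: add_divide_distrib)
    moreover have "(g 2 k 1 / g 2 k 2) * y \<le> B * y"
      unfolding B_def using m2 k y by (intro mult_right_mono) auto
    moreover have "s / g 2 k 2 \<le> c2" using c2ge k by simp
    ultimately show "(g 2 k 1 * y + s) / g 2 k 2 \<le> B * y + c2" by simp
  qed
  have f1c: "continuous_on UNIV f1" unfolding f1_def
    proof (rule cont_Max)
    fix k assume "k \<in> {1..K 1}"
    then have "g 1 k 1 \<noteq> 0" using gd by force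
    then show "continuous_on UNIV (\<lambda>y. (g 1 k 2 * y + s) / g 1 k 1)"
      by (intro continuous_intros) auto
  qed (use ne1 in auto)
  have f2c: "continuous_on UNIV f2" unfolding f2_def
    proof (rule cont_Max)
    fix k assume "k \<in> {1..K 2}"
    then have "g 2 k 2 \<noteq> 0" using gd by force
    then show "continuous_on UNIV (\<lambda>y. (g 2 k 1 * y + s) / g 2 k 2)"
      by (intro continuous_intros) auto
  qed (use ne2 in auto)
  have sinr1: "sinr K g s p 1 = p$1 / f1 (p$2)" if p: "p \<in> nonneg_orthant" for p
  proof -
    have "(\<lambda>k. sinr_k g s p 1 k) ` {1..K 1} = (\<lambda>k. p$1 / ((g 1 k 2 * p$2 + s) / g 1 k 1)) ` {1..K 1}"
    proof (rule image_cong)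
      fix k assume "k \<in> {1..K 1}"
      then have "g 1 k 1 \<noteq> 0" using gd by force
      then show "sinr_k g s p 1 k = p$1 / ((g 1 k 2 * p$2 + s) / g 1 k 1)"
        by (simp add: sinr_k_def sumU2 ac_simps)
    qed simp
    also have "Min \<dots> = p$1 / f1 (p$2)" unfolding f1_def
    proof (rule Min_div)
      show "0 \<le> p$1" using p unfolding nonneg_orthant_def by auto
      fix k assume k: "k \<in> {1..K 1}"
      have "0 \<le> p$2" using p unfolding nonneg_orthant_def by auto
      then have "0 \<le> g 1 k 2 * p$2" using c12[OF k] by simp
      then show "0 < (g 1 k 2 * p$2 + s) / g 1 k 1" using gd[OF k] s by simp
    qed (use ne1 in auto)
    finally show ?thesis unfolding sinr_def .
  qed
  have sinr2: "sinr K g s p 2 = p$2 / f2 (p$1)" if p: "p \<in> nonneg_orthant" for p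
  proof -
    have "(\<lambda>k. sinr_k g s p 2 k) ` {1..K 2} = (\<lambda>k. p$2 / ((g 2 k 1 * p$1 + s) / g 2 k 2)) ` {1..K 2}"
    proof (rule image_cong)
      fix k assume "k \<in> {1..K 2}"
      then have "g 2 k 2 \<noteq> 0" using gd by force
      then show "sinr_k g s p 2 k = p$2 / ((g 2 k 1 * p$1 + s) / g 2 k 2)"
        by (simp add: sinr_k_def sumU2 ac_simps)
    qed simp
    also have "Min \<dots> = p$2 / f2 (p$1)" unfolding f2_def
    proof (rule Min_div)
      show "0 \<le> p$2" using p unfolding nonneg_orthant_def by auto
      fix k assume k: "k \<in> {1..K 2}"
      have "0 \<le> p$1" using p unfolding nonneg_orthant_def by auto
      then have "0 \<le> g 2 k 1 * p$1" using c21[OF k] by simp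
      then show "0 < (g 2 k 1 * p$1 + s) / g 2 k 2" using gd[OF k] s by simp
    qed (use ne2 in auto)
    finally show ?thesis unfolding sinr_def .
  qed
  define S where "S = {\<mu>::real^2. 0 \<le> \<mu>$1 \<and> 0 \<le> \<mu>$2 \<and> \<mu>$1 * \<mu>$2 < C}"
  have feq: "feasible_region K g s = S"
  proof
    show "feasible_region K g s \<subseteq> S"
    proof
      fix \<mu> assume "\<mu> \<in> feasible_region K g s"
      then obtain p where p: "p \<in> nonneg_orthant" and mu: "\<mu> = Gamma K g s p"
        unfolding feasible_region_def by auto
      have p1: "0 \<le> p$1" and p2: "0 \<le> p$2" using p unfolding nonneg_orthant_def by auto
      have m1e: "\<mu>$1 = p$1 / f1 (p$2)" using mu sinr1[OF p] unfolding Gamma_def by simp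
      have m2e: "\<mu>$2 = p$2 / f2 (p$1)" using mu sinr2[OF p] unfolding Gamma_def by simp
      have F1: "0 < f1 (p$2)" using f1pos p2 by simp
      have F2: "0 < f2 (p$1)" using f2pos p1 by simp
      have "(A * p$2 + s / g 1 k1 1) * (B * p$1 + s / g 2 k2 2) \<le> f1 (p$2) * f2 (p$1)"
        using f1ge f2ge a1 a2 Ap Bp p1 p2 F1 by (intro mult_mono) auto
      moreover have "A * B * (p$1 * p$2) < (A * p$2 + s / g 1 k1 1) * (B * p$1 + s / g 2 k2 2)"
      proof -
        have "(A * p$2 + s / g 1 k1 1) * (B * p$1 + s / g 2 k2 2) =
          A * B * (p$1 * p$2) + (A * p$2 * (s / g 2 k2 2) + s / g 1 k1 1 * (B * p$1)) + s / g 1 k1 1 * (s / g 2 k2 2)"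
          by (simp add: algebra_simps)
        moreover have "0 \<le> A * p$2 * (s / g 2 k2 2) + s / g 1 k1 1 * (B * p$1)"
          using Ap Bp a1 a2 p1 p2 by (intro add_nonneg_nonneg mult_nonneg_nonneg) auto
        moreover have "0 < s / g 1 k1 1 * (s / g 2 k2 2)" using a1 a2 by (rule mult_pos_pos)
        ultimately show ?thesis by linarith
      qed
      ultimately have lt: "A * B * (p$1 * p$2) < f1 (p$2) * f2 (p$1)" by linarith
      have "\<mu>$1 * \<mu>$2 * (A * B) = (A * B * (p$1 * p$2)) / (f1 (p$2) * f2 (p$1))"
        unfolding m1e m2e by simp
      also have "\<dots> < 1" using lt F1 F2 by simp
      finally have "\<mu>$1 * \<mu>$2 * (A * B) < 1" .
      then have "C * (\<mu>$1 * \<mu>$2 * (A * B)) < C" using Cp by simp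
      then have "\<mu>$1 * \<mu>$2 < C" using CAB by (metis mult.commute mult.left_commute mult_1_right)
      moreover have "0 \<le> \<mu>$1" "0 \<le> \<mu>$2" unfolding m1e m2e using F1 F2 p1 p2 by auto
      ultimately show "\<mu> \<in> S" unfolding S_def by simp
    qed
  next
    show "S \<subseteq> feasible_region K g s"
    proof
      fix \<mu> assume "\<mu> \<in> S"
      then have u1: "0 \<le> \<mu>$1" and u2: "0 \<le> \<mu>$2" and uC: "\<mu>$1 * \<mu>$2 < C" unfolding S_def by auto
      define h where "h x = \<mu>$1 * f1 (\<mu>$2 * f2 x)" for x
      define r where "r = \<mu>$1 * \<mu>$2 * (A * B)"
      have r1: "r < 1" unfolding r_def using uC CAB Ap Bp
        by (metis mult_strict_right_mono mult_pos_pos)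
      define D where "D = \<mu>$1 * (A * \<mu>$2 * c2 + c1)"
      have D0: "0 \<le> D" unfolding D_def using u1 u2 Ap c1nn c2nn by simp
      define X where "X = D / (1 - r) + 1"
      have X0: "0 \<le> X" unfolding X_def using D0 r1 by simp
      have hX: "h X \<le> r * X + D"
      proof -
        have q: "0 \<le> \<mu>$2 * f2 X" using u2 f2pos[OF X0] by simp
        have "h X \<le> \<mu>$1 * (A * (\<mu>$2 * f2 X) + c1)"
          unfolding h_def using f1le[OF q] u1 by (rule mult_left_mono)
        also have "\<dots> \<le> \<mu>$1 * (A * (\<mu>$2 * (B * X + c2)) + c1)"
          using f2le[OF X0] u1 u2 Ap
          by (intro mult_left_mono add_right_mono) (auto intro!: mult_left_mono)
        also have "\<dots> = r * X + D" unfolding r_def D_def by (simp add: algebra_simps)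
        finally show ?thesis .
      qed
      have "(1 - r) * X = D + (1 - r)" unfolding X_def using r1 by (simp add: field_simps)
      then have "h X \<le> X" using hX r1 by (simp add: algebra_simps)
      moreover have "0 \<le> h 0" unfolding h_def using u1 f1pos u2 f2pos
        by (simp add: less_imp_le)
      moreover have "continuous_on {0..X} (\<lambda>x. x - h x)"
      proof -
        have "continuous_on UNIV (\<lambda>x. \<mu>$2 * f2 x)" using f2c by (intro continuous_intros)
        then have "continuous_on UNIV (\<lambda>x. f1 (\<mu>$2 * f2 x))"
          by (rule continuous_on_compose2[OF f1c]) simp
        then have "continuous_on UNIV h" unfolding h_def by (intro continuous_intros)
        then have "continuous_on {0..X} h" by (rule continuous_on_subset) simp
        then show ?thesis by (intro continuous_intros)
      qed
      ultimately obtain x where x0: "0 \<le> x" and xX: "x \<le> X" and fx: "x - h x = 0"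
        using IVT'[of "\<lambda>x. x - h x" 0 0 X] X0 by auto
      define p :: "real^2" where "p = (\<chi> i. if i = 1 then x else \<mu>$2 * f2 x)"
      have pv: "p$1 = x" "p$2 = \<mu>$2 * f2 x" unfolding p_def by simp_all
      have p: "p \<in> nonneg_orthant"
      proof -
        have "0 \<le> \<mu>$2 * f2 x" using u2 f2pos[OF x0] by simp
        then show ?thesis unfolding nonneg_orthant_def forall_2 using pv x0 by simp
      qed
      have "Gamma K g s p = \<mu>"
        unfolding vec_eq_iff forall_2 Gamma_def vec_lambda_beta sinr1[OF p] sinr2[OF p] pv
      proof
        define F where "F = f1 (\<mu>$2 * f2 x)"
        have e: "x = \<mu>$1 * F" using fx unfolding h_def F_def by simp
        have "0 < F" unfolding F_def using f1pos u2 f2pos[OF x0] by (simp add: less_imp_le)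
        then have "x / F = \<mu>$1" unfolding e by simp
        then show "x / f1 (\<mu>$2 * f2 x) = \<mu>$1" unfolding F_def .
        show "\<mu>$2 * f2 x / f2 x = \<mu>$2" using f2pos[OF x0] by simp
      qed
      then show "\<mu> \<in> feasible_region K g s" unfolding feasible_region_def using p by blast
    qed
  qed
  have ieq: "infeasible_region K g s = {\<mu>::real^2. 0 \<le> \<mu>$1 \<and> 0 \<le> \<mu>$2 \<and> C \<le> \<mu>$1 * \<mu>$2}"
    unfolding infeasible_region_def feq S_def nonneg_orthant_def forall_2 by auto
  have "convex (infeasible_region K g s)"
    unfolding ieq convex_def
  proof (intro ballI allI impI)
    fix x y :: "real^2" and u v :: real
    assume x: "x \<in> {\<mu>. 0 \<le> \<mu> $ 1 \<and> 0 \<le> \<mu> $ 2 \<and> C \<le> \<mu> $ 1 * \<mu> $ 2}"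
      and y: "y \<in> {\<mu>. 0 \<le> \<mu> $ 1 \<and> 0 \<le> \<mu> $ 2 \<and> C \<le> \<mu> $ 1 * \<mu> $ 2}"
      and uv: "0 \<le> u" "0 \<le> v" "u + v = 1"
    show "u *\<^sub>R x + v *\<^sub>R y \<in> {\<mu>. 0 \<le> \<mu> $ 1 \<and> 0 \<le> \<mu> $ 2 \<and> C \<le> \<mu> $ 1 * \<mu> $ 2}"
      using hyp_conv[of "x$1" "x$2" "y$1" "y$2" C u v] x y uv Cp by simp
  qed
  then show ?thesis using feq unfolding S_def C_def by simp
qed

lemma ex_min: "sinr ex_K ex_gain s p i = min (sinr_k ex_gain s p i 1) (sinr_k ex_gain s p i 2)"
proof -
  have "{1..2::nat} = {1,2}" by auto
  then show ?thesis unfolding sinr_def ex_K_def by simp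
qed

lemma part2:
  assumes s: "0 < (s::real)"
  shows "\<not> convex (infeasible_region ex_K ex_gain s)"
proof
  assume cv: "convex (infeasible_region ex_K ex_gain s)"
  define a :: "real^3" where "a = (\<chi> i. if i = 3 then 0 else 2)"
  define b :: "real^3" where "b = (\<chi> i. if i = 2 then 0 else 2)"
  have a1: "a$1 = 2" "a$2 = 2" "a$3 = 0" unfolding a_def by simp_all
  have b1: "b$1 = 2" "b$2 = 0" "b$3 = 2" unfolding b_def by simp_all
  have ain: "a \<in> infeasible_region ex_K ex_gain s"
  proof -
    have "a \<in> nonneg_orthant" unfolding nonneg_orthant_def a_def by simp
    moreover have "a \<notin> feasible_region ex_K ex_gain s"
    proof
      assume "a \<in> feasible_region ex_K ex_gain s"
      then obtain p where p: "p \<in> nonneg_orthant" and ap: "a = Gamma ex_K ex_gain s p"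
        unfolding feasible_region_def by auto
      have p0: "0 \<le> p$1" "0 \<le> p$2" "0 \<le> p$3" using p unfolding nonneg_orthant_def by auto
      have g1: "sinr ex_K ex_gain s p 1 = 2" and g2: "sinr ex_K ex_gain s p 2 = 2"
        using a1 ap unfolding Gamma_def by auto
      have "2 \<le> p$1 / (1/2 * p$2 + 1/10 * p$3 + s)"
        using g1 unfolding ex_min ex_sinr by linarith
      then have e1: "2 * (1/2 * p$2 + 1/10 * p$3 + s) \<le> p$1"
        using p0 s by (simp add: pos_le_divide_eq)
      have "2 \<le> p$2 / (1/2 * p$1 + 1/10 * p$3 + s)"
        using g2 unfolding ex_min ex_sinr by linarith
      then have e2: "2 * (1/2 * p$1 + 1/10 * p$3 + s) \<le> p$2"
        using p0 s by (simp add: pos_le_divide_eq)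
      show False using e1 e2 p0 s unfolding ring_distribs by linarith
    qed
    ultimately show ?thesis unfolding infeasible_region_def by auto
  qed
  have bin: "b \<in> infeasible_region ex_K ex_gain s"
  proof -
    have "b \<in> nonneg_orthant" unfolding nonneg_orthant_def b_def by simp
    moreover have "b \<notin> feasible_region ex_K ex_gain s"
    proof
      assume "b \<in> feasible_region ex_K ex_gain s"
      then obtain p where p: "p \<in> nonneg_orthant" and ap: "b = Gamma ex_K ex_gain s p"
        unfolding feasible_region_def by auto
      have p0: "0 \<le> p$1" "0 \<le> p$2" "0 \<le> p$3" using p unfolding nonneg_orthant_def by auto
      have g1: "sinr ex_K ex_gain s p 1 = 2" and g2: "sinr ex_K ex_gain s p 3 = 2"
        using b1 ap unfolding Gamma_def by auto
      have "2 \<le> p$1 / (1/10 * p$2 + 1/2 * p$3 + s)"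
        using g1 unfolding ex_min ex_sinr by linarith
      then have e1: "2 * (1/10 * p$2 + 1/2 * p$3 + s) \<le> p$1"
        using p0 s by (simp add: pos_le_divide_eq)
      have "2 \<le> p$3 / (1/2 * p$1 + 1/10 * p$2 + s)"
        using g2 unfolding ex_min ex_sinr by linarith
      then have e2: "2 * (1/2 * p$1 + 1/10 * p$2 + s) \<le> p$3"
        using p0 s by (simp add: pos_le_divide_eq)
      show False using e1 e2 p0 s unfolding ring_distribs by linarith
    qed
    ultimately show ?thesis unfolding infeasible_region_def by auto
  qed
  have "(1/2) *\<^sub>R a + (1/2) *\<^sub>R b \<in> infeasible_region ex_K ex_gain s"
    using cv ain bin unfolding convex_def by (metis field_sum_of_halves le_divide_eq_1_pos zero_less_numeral less_imp_le zero_le_one divide_nonneg_nonneg zero_le_numeral)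
  moreover
  define p :: "real^3" where "p = (\<chi> i. if i = 1 then 10 * s else 20/3 * s)"
  have pv: "p$1 = 10 * s" "p$2 = 20/3 * s" "p$3 = 20/3 * s" unfolding p_def by simp_all
  have "Gamma ex_K ex_gain s p = (1/2) *\<^sub>R a + (1/2) *\<^sub>R b"
    unfolding vec_eq_iff forall_3 Gamma_def
    apply (simp only: vec_lambda_beta ex_min ex_sinr pv vector_add_component vector_scaleR_component a1 b1)
    using s by (simp add: field_simps)
  moreover have "p \<in> nonneg_orthant" unfolding nonneg_orthant_def p_def using s by simp
  ultimately show False unfolding infeasible_region_def feasible_region_def by (metis DiffD2 image_eqI)
qed

theorem theorem4:
  shows
  "(\<forall>(K :: 2 \<Rightarrow> nat) g s k1 k2.
      valid_system K g s \<longrightarrow>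
      (\<forall>i k j. k \<in> {1..K i} \<longrightarrow> j \<noteq> i \<longrightarrow> 0 < g i k j) \<longrightarrow>
      k1 \<in> {1..K 1} \<longrightarrow> (\<forall>k\<in>{1..K 1}. g 1 k 2 / g 1 k 1 \<le> g 1 k1 2 / g 1 k1 1) \<longrightarrow>
      k2 \<in> {1..K 2} \<longrightarrow> (\<forall>k\<in>{1..K 2}. g 2 k 1 / g 2 k 2 \<le> g 2 k2 1 / g 2 k2 2) \<longrightarrow>
      convex (infeasible_region K g s) \<and>
      feasible_region K g s =
        {\<mu>. 0 \<le> \<mu>$1 \<and> 0 \<le> \<mu>$2 \<and>
             \<mu>$1 * \<mu>$2 < (g 1 k1 1 / g 1 k1 2) * (g 2 k2 2 / g 2 k2 1)})
   \<and>
   (\<forall>s::real. 0 < s \<longrightarrow> \<not> convex (infeasible_region ex_K ex_gain s))"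
    using part1 part2 by blast

end
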